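(* Let $X$ be a real vector space of dimension $\geq 3$ and let $P,R:X\to X$ be (not necessarily linear) mappings such that $P^2=P$, $R^2=R$ and $P+R=I$ (the identity). Write $\mathcal P=PX$ and $\mathcal R=RX$. Then: (i) $PR=RP=0$; (ii) $\mathcal P\cap\mathcal R=\{0\}$ and $\mathcal P+\mathcal R=X$; (iii) $P0=R0=0$; (iv) $Px-Rx=0$ if and only if $x=0$.
   Context: Such a pair $P,R$ is called a pair of mutually polar retractions; $0$ denotes the zero mapping. *)

theory Defs
  imports "HOL-Analysis.Analysis"
begin

definition dim_at_least :: "nat \<Rightarrow> 'a::real_vector itself \<Rightarrow> bool" where
  "dim_at_least n _ \<longleftrightarrow> (\<exists>B::'a set. finite B \<and> card B = n \<and> independent B)"

end

theory Submission
  imports Defs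
begin

theorem proposition1:
  fixes P R :: "'a::real_vector \<Rightarrow> 'a"
  assumes dim3: "dim_at_least 3 TYPE('a)"
    and idemP: "P \<circ> P = P"
    and idemR: "R \<circ> R = R"
    and sumI: "\<And>x. P x + R x = x"
  shows "(P \<circ> R = (\<lambda>_. 0) \<and> R \<circ> P = (\<lambda>_. 0))
       \<and> (range P \<inter> range R = {0} \<and> {p + r | p r. p \<in> range P \<and> r \<in> range R} = UNIV)
       \<and> (P 0 = 0 \<and> R 0 = 0)
       \<and> (\<forall>x. P x - R x = 0 \<longleftrightarrow> x = 0)"
proof -
  have PP: "P (P x) = P x" for x using idemP by (metis comp_apply)
  have RR: "R (R x) = R x" for x using idemR by (metis comp_apply)
  have PR: "P (R x) = 0" for x
    using sumI[of "R x"] RR[of x] by simp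
  have RP: "R (P x) = 0" for x
    using sumI[of "P x"] PP[of x] by simp
  have P0: "P 0 = 0" using PR[of "P 0"] RP[of 0] by simp
  have R0: "R 0 = 0" using RP[of "R 0"] PR[of 0] by simp
  have inter: "range P \<inter> range R = {0}"
  proof
    show "range P \<inter> range R \<subseteq> {0}"
    proof
      fix y assume "y \<in> range P \<inter> range R"
      then obtain a b where "y = P a" "y = R b" by blast
      then have "P y = y" "P y = 0" using PP PR by metis+
      then show "y \<in> {0}" by simp
    qed
    show "{0} \<subseteq> range P \<inter> range R" using P0 R0 by (metis IntI empty_subsetI insert_subset rangeI)
  qed
  have sum: "{p + r | p r. p \<in> range P \<and> r \<in> range R} = UNIV"
  proof (rule set_eqI, rule iffI)
    fix x show "x \<in> {p + r | p r. p \<in> range P \<and> r \<in> range R}"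
      using sumI[of x] by (metis (mono_tags, lifting) mem_Collect_eq rangeI)
  qed simp
  have iv: "\<forall>x. P x - R x = 0 \<longleftrightarrow> x = 0"
  proof (intro allI iffI)
    fix x assume "P x - R x = 0"
    then have "P x = R x" by simp
    then have "P x \<in> range P \<inter> range R" by (metis IntI rangeI)
    then have "P x = 0" using inter by blast
    with \<open>P x = R x\<close> sumI[of x] show "x = 0" by simp
  next
    fix x :: 'a assume "x = 0" then show "P x - R x = 0" using P0 R0 by simp
  qed
  show ?thesis using PR RP P0 R0 inter sum iv by (auto simp: fun_eq_iff)
qed

end
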